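(* Let $T$ be a non-abelian finite simple group, $k\geqslant 2$, $W=W(k,T)=T^k.(\mathrm{Out}(T)\times S_k)$ acting on $\Omega=[W:D]$, and let $t_1,\dots,t_k\in T$. Then $\{D,D(\varphi_{t_1},\dots,\varphi_{t_k})\}$ is a base for $W$ if and only if $t_1,\dots,t_k$ are distinct and $\mathrm{Hol}(T,\{t_1,\dots,t_k\})=1$.
   Context: $W(k,T)=\{(\alpha_1,\dots,\alpha_k)\pi\in\mathrm{Aut}(T)\wr S_k:\alpha_1\mathrm{Inn}(T)=\alpha_i\mathrm{Inn}(T)\ \forall i\}$, $D=\{(\alpha,\dots,\alpha)\pi:\alpha\in\mathrm{Aut}(T),\pi\in S_k\}$, $\Omega$ the right cosets of $D$ in $W$ with action by right multiplication. $\varphi_t$ is the inner automorphism $x\mapsto t^{-1}xt$. A base is a subset of $\Omega$ with trivial pointwise stabiliser. $\mathrm{Hol}(T)=T{:}\mathrm{Aut}(T)$ acts on $T$ by $t^{g\alpha}=(g^{-1}t)^\alpha$, and $\mathrm{Hol}(T,S)$ is the setwise stabiliser of $S\subseteq T$. *)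

theory Defs
  imports "HOL-Algebra.Algebra" "HOL-Combinatorics.Permutations"
begin

(* Aut(T) as a group; elements are automorphisms restricted to carrier T.
   Composition follows the paper's right-action convention:
   alpha * beta means "first alpha, then beta". *)
definition aut_group :: "('a, 'b) monoid_scheme \<Rightarrow> ('a \<Rightarrow> 'a) monoid" where
  "aut_group T = \<lparr> carrier = {\<alpha>. \<alpha> \<in> iso T T \<and> \<alpha> \<in> extensional (carrier T)},
                  monoid.mult = (\<lambda>\<alpha> \<beta>. restrict (\<beta> \<circ> \<alpha>) (carrier T)),
                  one = restrict id (carrier T) \<rparr>"

definition inner :: "('a, 'b) monoid_scheme \<Rightarrow> 'a \<Rightarrow> ('a \<Rightarrow> 'a)" where
  "inner T t = restrict (\<lambda>x. inv\<^bsub>T\<^esub> t \<otimes>\<^bsub>T\<^esub> x \<otimes>\<^bsub>T\<^esub> t) (carrier T)"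

definition Inn :: "('a, 'b) monoid_scheme \<Rightarrow> ('a \<Rightarrow> 'a) set" where
  "Inn T = inner T ` carrier T"

(* Aut(T) wr S_k: elements (alpha, pi) with alpha : {0..<k} \<rightarrow> Aut(T), pi a permutation
   of {0..<k} (acting on the right: i^pi = pi i).
   (alpha)pi * (beta)sigma = (alpha_i beta_{i pi})_i (pi sigma). *)
definition wreath :: "('a, 'b) monoid_scheme \<Rightarrow> nat \<Rightarrow>
    ((nat \<Rightarrow> ('a \<Rightarrow> 'a)) \<times> (nat \<Rightarrow> nat)) monoid" where
  "wreath T k = \<lparr> carrier = {(\<alpha>, \<pi>). \<alpha> \<in> {0..<k} \<rightarrow>\<^sub>E carrier (aut_group T) \<and> \<pi> permutes {0..<k}},
      monoid.mult = (\<lambda>(\<alpha>, \<pi>) (\<beta>, \<sigma>).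
                (\<lambda>i\<in>{0..<k}. \<alpha> i \<otimes>\<^bsub>aut_group T\<^esub> \<beta> (\<pi> i), \<sigma> \<circ> \<pi>)),
      one = (\<lambda>i\<in>{0..<k}. \<one>\<^bsub>aut_group T\<^esub>, id) \<rparr>"

(* W(k,T): alpha_1 Inn(T) = alpha_i Inn(T) for all i (index 0 plays the role of 1) *)
definition W_set :: "('a, 'b) monoid_scheme \<Rightarrow> nat \<Rightarrow> ((nat \<Rightarrow> ('a \<Rightarrow> 'a)) \<times> (nat \<Rightarrow> nat)) set" where
  "W_set T k = {(\<alpha>, \<pi>) \<in> carrier (wreath T k).
       \<forall>i\<in>{0..<k}. \<alpha> 0 <#\<^bsub>aut_group T\<^esub> Inn T = \<alpha> i <#\<^bsub>aut_group T\<^esub> Inn T}"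

definition W_group :: "('a, 'b) monoid_scheme \<Rightarrow> nat \<Rightarrow> ((nat \<Rightarrow> ('a \<Rightarrow> 'a)) \<times> (nat \<Rightarrow> nat)) monoid" where
  "W_group T k = (wreath T k) \<lparr> carrier := W_set T k \<rparr>"

definition D_set :: "('a, 'b) monoid_scheme \<Rightarrow> nat \<Rightarrow> ((nat \<Rightarrow> ('a \<Rightarrow> 'a)) \<times> (nat \<Rightarrow> nat)) set" where
  "D_set T k = {((\<lambda>i\<in>{0..<k}. a), \<pi>) | a \<pi>. a \<in> carrier (aut_group T) \<and> \<pi> permutes {0..<k}}"

(* Omega = right cosets of D in W, acted on by right multiplication Dx \<mapsto> Dxw.
   A base is a subset of Omega with trivial pointwise stabiliser. *)
definition is_base :: "('a, 'b) monoid_scheme \<Rightarrow> nat \<Rightarrow>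
    ((nat \<Rightarrow> ('a \<Rightarrow> 'a)) \<times> (nat \<Rightarrow> nat)) set set \<Rightarrow> bool" where
  "is_base T k B \<longleftrightarrow> B \<subseteq> rcosets\<^bsub>W_group T k\<^esub> (D_set T k) \<and>
     {w \<in> carrier (W_group T k). \<forall>\<omega>\<in>B. \<omega> #>\<^bsub>W_group T k\<^esub> w = \<omega>} = {\<one>\<^bsub>W_group T k\<^esub>}"

(* Hol(T) = T : Aut(T), elements (g, alpha) acting on T by t^{g alpha} = (g^{-1} t)^alpha;
   Hol(T,S) is the setwise stabiliser of S. *)
definition hol_stab :: "('a, 'b) monoid_scheme \<Rightarrow> 'a set \<Rightarrow> ('a \<times> ('a \<Rightarrow> 'a)) set" where
  "hol_stab T S = {(g, \<alpha>) \<in> carrier T \<times> carrier (aut_group T).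
       (\<lambda>s. \<alpha> (inv\<^bsub>T\<^esub> g \<otimes>\<^bsub>T\<^esub> s)) ` S = S}"

end

theory Submission
  imports Defs
begin

context group begin

lemma aut_carrier: "a \<in> carrier (aut_group G) \<longleftrightarrow> a \<in> iso G G \<and> a \<in> extensional (carrier G)"
  by (simp add: aut_group_def)
lemma aut_mult: "a \<otimes>\<^bsub>aut_group G\<^esub> b = restrict (b \<circ> a) (carrier G)"
  by (simp add: aut_group_def)
lemma aut_one: "\<one>\<^bsub>aut_group G\<^esub> = restrict id (carrier G)"
  by (simp add: aut_group_def)

lemma aut_group_hom: "a \<in> carrier (aut_group G) \<Longrightarrow> group_hom G G a"
  unfolding group_hom_def group_hom_axioms_def aut_carrier
  using is_group iso_imp_homomorphism by blast

lemma aut_bij: "a \<in> carrier (aut_group G) \<Longrightarrow> bij_betw a (carrier G) (carrier G)"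
  by (simp add: aut_carrier iso_def)

lemma aut_closed[simp]: "a \<in> carrier (aut_group G) \<Longrightarrow> x \<in> carrier G \<Longrightarrow> a x \<in> carrier G"
  using aut_bij bij_betwE by blast
lemma aut_m[simp]: "a \<in> carrier (aut_group G) \<Longrightarrow> x \<in> carrier G \<Longrightarrow> y \<in> carrier G \<Longrightarrow> a (x \<otimes> y) = a x \<otimes> a y"
  by (rule group_hom.hom_mult[OF aut_group_hom])
lemma aut_inv[simp]: "a \<in> carrier (aut_group G) \<Longrightarrow> x \<in> carrier G \<Longrightarrow> a (inv x) = inv (a x)"
  by (rule group_hom.hom_inv[OF aut_group_hom])
lemma aut_one'[simp]: "a \<in> carrier (aut_group G) \<Longrightarrow> a \<one> = \<one>"
  by (rule group_hom.hom_one[OF aut_group_hom])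
lemma aut_ext: "a \<in> carrier (aut_group G) \<Longrightarrow> x \<notin> carrier G \<Longrightarrow> a x = undefined"
  by (simp add: aut_carrier extensional_def)

lemma aut_eqI: "a \<in> carrier (aut_group G) \<Longrightarrow> b \<in> carrier (aut_group G) \<Longrightarrow> (\<And>x. x \<in> carrier G \<Longrightarrow> a x = b x) \<Longrightarrow> a = b"
  by (meson aut_carrier extensionalityI)

lemma aut_mult_closed:
  assumes a: "a \<in> carrier (aut_group G)" and b: "b \<in> carrier (aut_group G)"
  shows "a \<otimes>\<^bsub>aut_group G\<^esub> b \<in> carrier (aut_group G)"
proof -
  have "b \<circ> a \<in> iso G G" by (rule iso_set_trans[where H=G]) (use a b in \<open>simp_all add: aut_carrier\<close>)
  then have "restrict (b \<circ> a) (carrier G) \<in> iso G G" by (rule iso_eq) simp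
  then show ?thesis by (simp add: aut_mult aut_carrier)
qed

lemma aut_one_closed: "\<one>\<^bsub>aut_group G\<^esub> \<in> carrier (aut_group G)"
proof -
  have "restrict id (carrier G) \<in> iso G G" by (rule iso_eq[OF id_iso]) simp
  then show ?thesis by (simp add: aut_one aut_carrier)
qed

lemma group_aut: "group (aut_group G)"
proof (rule groupI)
  fix a b assume a: "a \<in> carrier (aut_group G)" and b: "b \<in> carrier (aut_group G)"
  show "a \<otimes>\<^bsub>aut_group G\<^esub> b \<in> carrier (aut_group G)" using a b by (rule aut_mult_closed)
next
  show "\<one>\<^bsub>aut_group G\<^esub> \<in> carrier (aut_group G)" by (rule aut_one_closed)
next
  fix a b c assume a: "a \<in> carrier (aut_group G)" and b: "b \<in> carrier (aut_group G)" and c: "c \<in> carrier (aut_group G)"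
  show "a \<otimes>\<^bsub>aut_group G\<^esub> b \<otimes>\<^bsub>aut_group G\<^esub> c = a \<otimes>\<^bsub>aut_group G\<^esub> (b \<otimes>\<^bsub>aut_group G\<^esub> c)"
    unfolding aut_mult using a by (simp add: restrict_def fun_eq_iff)
next
  fix a assume a: "a \<in> carrier (aut_group G)"
  show "\<one>\<^bsub>aut_group G\<^esub> \<otimes>\<^bsub>aut_group G\<^esub> a = a"
    unfolding aut_mult aut_one using a by (simp add: restrict_def fun_eq_iff aut_ext)
next
  fix a assume a: "a \<in> carrier (aut_group G)"
  define b where "b = restrict (inv_into (carrier G) a) (carrier G)"
  have bij: "bij_betw a (carrier G) (carrier G)" using aut_bij[OF a] .
  have "inv_into (carrier G) a \<in> iso G G" by (rule iso_set_sym) (use a in \<open>simp add: aut_carrier\<close>)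
  then have "b \<in> iso G G" unfolding b_def by (rule iso_eq) simp
  then have "b \<in> carrier (aut_group G)"
    unfolding aut_carrier b_def by simp
  moreover have "b \<otimes>\<^bsub>aut_group G\<^esub> a = \<one>\<^bsub>aut_group G\<^esub>"
    unfolding aut_mult aut_one b_def using bij
    by (simp add: restrict_def fun_eq_iff bij_betw_inv_into_right bij_betw_def inv_into_into)
  ultimately show "\<exists>y\<in>carrier (aut_group G). y \<otimes>\<^bsub>aut_group G\<^esub> a = \<one>\<^bsub>aut_group G\<^esub>" by blast
qed


lemma inner_apply[simp]: "x \<in> carrier G \<Longrightarrow> inner G t x = inv t \<otimes> x \<otimes> t"
  by (simp add: inner_def)

lemma cancel_help[simp]: "t \<in> carrier G \<Longrightarrow> z \<in> carrier G \<Longrightarrow> t \<otimes> (inv t \<otimes> z) = z"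
  "t \<in> carrier G \<Longrightarrow> z \<in> carrier G \<Longrightarrow> inv t \<otimes> (t \<otimes> z) = z"
  by (simp_all add: m_assoc[symmetric])

lemma inner_aut: assumes t: "t \<in> carrier G" shows "inner G t \<in> carrier (aut_group G)"
proof -
  have h: "inner G s \<in> hom G G" if s: "s \<in> carrier G" for s
    unfolding hom_def using s by (auto simp: m_assoc)
  have "group_isomorphisms G G (inner G t) (inner G (inv t))"
    unfolding group_isomorphisms_def using t h[OF t] h[of "inv t"]
    by (auto simp: m_assoc)
  then have "inner G t \<in> iso G G" by (rule group_isomorphisms_imp_iso)
  then show ?thesis by (simp add: aut_carrier inner_def)
qed

lemma inner_mult: assumes "s \<in> carrier G" "t \<in> carrier G"
  shows "inner G s \<otimes>\<^bsub>aut_group G\<^esub> inner G t = inner G (s \<otimes> t)"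
  unfolding aut_mult using assms by (auto simp: restrict_def fun_eq_iff inner_def inv_mult_group m_assoc)

lemma inner_one: "inner G \<one> = \<one>\<^bsub>aut_group G\<^esub>"
  by (auto simp: aut_one inner_def restrict_def fun_eq_iff)

lemma Inn_sub: "Inn G \<subseteq> carrier (aut_group G)"
  using inner_aut by (auto simp: Inn_def)

lemma Inn_coset: assumes t: "t \<in> carrier G"
  shows "inner G t <#\<^bsub>aut_group G\<^esub> Inn G = Inn G"
proof
  show "inner G t <#\<^bsub>aut_group G\<^esub> Inn G \<subseteq> Inn G"
    using t by (auto simp: l_coset_def Inn_def inner_mult)
  show "Inn G \<subseteq> inner G t <#\<^bsub>aut_group G\<^esub> Inn G"
  proof
    fix f assume "f \<in> Inn G"
    then obtain u where u: "u \<in> carrier G" "f = inner G u" by (auto simp: Inn_def)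
    have "f = inner G t \<otimes>\<^bsub>aut_group G\<^esub> inner G (inv t \<otimes> u)"
      using t u by (simp add: inner_mult flip: m_assoc)
    then show "f \<in> inner G t <#\<^bsub>aut_group G\<^esub> Inn G"
      using t u by (auto simp: l_coset_def Inn_def)
  qed
qed

lemma wreath_carrier: "(a, p) \<in> carrier (wreath G k) \<longleftrightarrow> a \<in> {0..<k} \<rightarrow>\<^sub>E carrier (aut_group G) \<and> p permutes {0..<k}"
  by (simp add: wreath_def)
lemma wreath_mult: "(a, p) \<otimes>\<^bsub>wreath G k\<^esub> (b, s) = (\<lambda>i\<in>{0..<k}. a i \<otimes>\<^bsub>aut_group G\<^esub> b (p i), s \<circ> p)"
  by (simp add: wreath_def)
lemma wreath_one: "\<one>\<^bsub>wreath G k\<^esub> = (\<lambda>i\<in>{0..<k}. \<one>\<^bsub>aut_group G\<^esub>, id)"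
  by (simp add: wreath_def)

lemma group_wreath: "group (wreath G k)"
proof -
  interpret A: group "aut_group G" by (rule group_aut)
  show ?thesis
  proof (rule groupI)
    fix x y assume x: "x \<in> carrier (wreath G k)" and y: "y \<in> carrier (wreath G k)"
    obtain a p b s where xy: "x = (a, p)" "y = (b, s)" by (cases x; cases y)
    have p: "p permutes {0..<k}" and s: "s permutes {0..<k}" and a: "\<forall>i<k. a i \<in> carrier (aut_group G)"
      and b: "\<forall>i<k. b i \<in> carrier (aut_group G)"
      using x y xy by (auto simp: wreath_carrier PiE_iff)
    have pk: "\<forall>i<k. p i < k" using permutes_in_image[OF p] by auto
    show "x \<otimes>\<^bsub>wreath G k\<^esub> y \<in> carrier (wreath G k)"
      unfolding xy wreath_mult wreath_carrier using a b pk p s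
      by (auto simp: permutes_compose)
  next
    show "\<one>\<^bsub>wreath G k\<^esub> \<in> carrier (wreath G k)"
      by (simp add: wreath_one wreath_carrier permutes_id)
  next
    fix x y z assume x: "x \<in> carrier (wreath G k)" and y: "y \<in> carrier (wreath G k)" and z: "z \<in> carrier (wreath G k)"
    obtain a p b s c r where xy: "x = (a, p)" "y = (b, s)" "z = (c, r)" by (cases x; cases y; cases z)
    have p: "p permutes {0..<k}" and s: "s permutes {0..<k}" and a: "\<forall>i<k. a i \<in> carrier (aut_group G)"
      and b: "\<forall>i<k. b i \<in> carrier (aut_group G)" and c: "\<forall>i<k. c i \<in> carrier (aut_group G)"
      using x y z xy by (auto simp: wreath_carrier PiE_iff)
    have pk: "\<forall>i<k. p i < k" using permutes_in_image[OF p] by auto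
    have sk: "\<forall>i<k. s i < k" using permutes_in_image[OF s] by auto
    show "x \<otimes>\<^bsub>wreath G k\<^esub> y \<otimes>\<^bsub>wreath G k\<^esub> z = x \<otimes>\<^bsub>wreath G k\<^esub> (y \<otimes>\<^bsub>wreath G k\<^esub> z)"
      unfolding xy wreath_mult using a b c pk sk
      by (auto simp: A.m_assoc restrict_def fun_eq_iff)
  next
    fix x assume "x \<in> carrier (wreath G k)"
    then show "\<one>\<^bsub>wreath G k\<^esub> \<otimes>\<^bsub>wreath G k\<^esub> x = x"
      by (cases x) (auto simp: wreath_carrier wreath_mult wreath_one fun_eq_iff PiE_iff extensional_def)
  next
    fix x assume x: "x \<in> carrier (wreath G k)"
    obtain b s where xbs: "x = (b, s)" by (cases x)
    have b: "b \<in> {0..<k} \<rightarrow>\<^sub>E carrier (aut_group G)" and s: "s permutes {0..<k}"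
      using x xbs by (auto simp: wreath_carrier)
    define y where "y = (\<lambda>i\<in>{0..<k}. inv\<^bsub>aut_group G\<^esub> (b (Hilbert_Choice.inv s i)), Hilbert_Choice.inv s)"
    have "y \<in> carrier (wreath G k)"
      unfolding y_def wreath_carrier using b s
      using permutes_in_image[OF permutes_inv[OF s]]
      by (auto simp: permutes_inv[OF s] PiE_iff intro!: A.inv_closed)
    moreover have "y \<otimes>\<^bsub>wreath G k\<^esub> x = \<one>\<^bsub>wreath G k\<^esub>"
    proof -
      have "\<forall>i<k. Hilbert_Choice.inv s i < k" using permutes_in_image[OF permutes_inv[OF s]] by auto
      then show ?thesis
        unfolding y_def xbs wreath_mult wreath_one using b s
        by (auto simp: permutes_inverses[OF s] permutes_inv_o[OF s] PiE_iff restrict_def fun_eq_iff A.l_inv)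
    qed
    ultimately show "\<exists>y\<in>carrier (wreath G k). y \<otimes>\<^bsub>wreath G k\<^esub> x = \<one>\<^bsub>wreath G k\<^esub>" by blast
  qed
qed


lemma grp_id1: "u \<in> carrier G \<Longrightarrow> w \<in> carrier G \<Longrightarrow> w = u \<otimes> (inv u \<otimes> w \<otimes> u) \<otimes> inv u"
  by (simp add: m_assoc)

lemma D_elem: "w \<in> D_set G k \<Longrightarrow> \<exists>a p. w = ((\<lambda>i\<in>{0..<k}. a), p) \<and> a \<in> carrier (aut_group G) \<and> p permutes {0..<k}"
  by (auto simp: D_set_def)

lemma D_mem: "a \<in> carrier (aut_group G) \<Longrightarrow> p permutes {0..<k} \<Longrightarrow> ((\<lambda>i\<in>{0..<k}. a), p) \<in> D_set G k"
  by (auto simp: D_set_def)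

lemma D_subgroup: "subgroup (D_set G k) (wreath G k)"
proof -
  interpret W: group "wreath G k" by (rule group_wreath)
  interpret A: group "aut_group G" by (rule group_aut)
  show ?thesis
  proof (rule W.subgroupI)
    show "D_set G k \<subseteq> carrier (wreath G k)"
      by (auto simp: D_set_def wreath_carrier)
    have "\<one>\<^bsub>wreath G k\<^esub> \<in> D_set G k"
      unfolding wreath_one by (rule D_mem) simp_all
    then show "D_set G k \<noteq> {}" by blast
  next
    fix w assume "w \<in> D_set G k"
    then obtain a p where w: "w = ((\<lambda>i\<in>{0..<k}. a), p)" and a: "a \<in> carrier (aut_group G)" and p: "p permutes {0..<k}"
      by (blast dest: D_elem)
    have pk: "\<forall>i<k. Hilbert_Choice.inv p i < k" using permutes_in_image[OF permutes_inv[OF p]] by auto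
    have "inv\<^bsub>wreath G k\<^esub> w = ((\<lambda>i\<in>{0..<k}. inv\<^bsub>aut_group G\<^esub> a), Hilbert_Choice.inv p)"
    proof (rule W.inv_equality)
      show "((\<lambda>i\<in>{0..<k}. inv\<^bsub>aut_group G\<^esub> a), Hilbert_Choice.inv p) \<otimes>\<^bsub>wreath G k\<^esub> w = \<one>\<^bsub>wreath G k\<^esub>"
        unfolding w wreath_mult wreath_one using a pk by (auto simp: fun_eq_iff permutes_inv_o[OF p])
      show "w \<in> carrier (wreath G k)" unfolding w wreath_carrier using a p by auto
      show "((\<lambda>i\<in>{0..<k}. inv\<^bsub>aut_group G\<^esub> a), Hilbert_Choice.inv p) \<in> carrier (wreath G k)"
        unfolding wreath_carrier using a permutes_inv[OF p] by auto
    qed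
    then show "inv\<^bsub>wreath G k\<^esub> w \<in> D_set G k"
      using a permutes_inv[OF p] by (simp add: D_mem)
  next
    fix w v assume "w \<in> D_set G k" "v \<in> D_set G k"
    then obtain a p b s where w: "w = ((\<lambda>i\<in>{0..<k}. a), p)" and a: "a \<in> carrier (aut_group G)" and p: "p permutes {0..<k}"
      and v: "v = ((\<lambda>i\<in>{0..<k}. b), s)" and b: "b \<in> carrier (aut_group G)" and s: "s permutes {0..<k}"
      by (blast dest: D_elem)
    have pk: "\<forall>i<k. p i < k" using permutes_in_image[OF p] by auto
    have "w \<otimes>\<^bsub>wreath G k\<^esub> v = ((\<lambda>i\<in>{0..<k}. a \<otimes>\<^bsub>aut_group G\<^esub> b), s \<circ> p)"
      unfolding w v wreath_mult using pk by (auto simp: fun_eq_iff)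
    then show "w \<otimes>\<^bsub>wreath G k\<^esub> v \<in> D_set G k"
      using a b p s by (simp add: D_mem permutes_compose)
  qed
qed

lemma D_W: "D_set G k \<subseteq> W_set G k"
  by (auto simp: D_set_def W_set_def wreath_carrier)

lemma one_W: "\<one>\<^bsub>wreath G k\<^esub> \<in> W_set G k"
  using D_W subgroup.one_closed[OF D_subgroup] by blast

lemma x_W: assumes "\<forall>i<k. t i \<in> carrier G"
  shows "((\<lambda>i\<in>{0..<k}. inner G (t i)), id) \<in> W_set G k"
  using assms by (auto simp: W_set_def wreath_carrier inner_aut Inn_coset)


lemma conj_iff:
  assumes Z: "\<And>z. z \<in> carrier G \<Longrightarrow> \<forall>y\<in>carrier G. z \<otimes> y = y \<otimes> z \<Longrightarrow> z = \<one>"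
  and k: "0 < k" and t: "\<forall>i<k. t i \<in> carrier G"
  and a: "a \<in> carrier (aut_group G)" and p: "p permutes {0..<k}"
  shows "(\<exists>d\<in>D_set G k. ((\<lambda>i\<in>{0..<k}. inner G (t i)), id) \<otimes>\<^bsub>wreath G k\<^esub> ((\<lambda>i\<in>{0..<k}. a), p)
              = d \<otimes>\<^bsub>wreath G k\<^esub> ((\<lambda>i\<in>{0..<k}. inner G (t i)), id))
     \<longleftrightarrow> (\<exists>c\<in>carrier G. \<forall>i<k. t (p i) = c \<otimes> a (t i))"
proof -
  interpret A: group "aut_group G" by (rule group_aut)
  have pk: "\<And>i. i < k \<Longrightarrow> p i < k" using permutes_in_image[OF p] by auto
  have L: "((\<lambda>i\<in>{0..<k}. inner G (t i)), id) \<otimes>\<^bsub>wreath G k\<^esub> ((\<lambda>i\<in>{0..<k}. a), p)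
       = ((\<lambda>i\<in>{0..<k}. inner G (t i) \<otimes>\<^bsub>aut_group G\<^esub> a), p)"
    unfolding wreath_mult by (auto simp: fun_eq_iff)
  have R: "((\<lambda>i\<in>{0..<k}. b), s) \<otimes>\<^bsub>wreath G k\<^esub> ((\<lambda>i\<in>{0..<k}. inner G (t i)), id)
       = ((\<lambda>i\<in>{0..<k}. b \<otimes>\<^bsub>aut_group G\<^esub> inner G (t (s i))), s)" if s: "s permutes {0..<k}" for b s
  proof -
    have "\<And>i. i < k \<Longrightarrow> s i < k" using permutes_in_image[OF s] by auto
    then show ?thesis unfolding wreath_mult by (auto simp: fun_eq_iff)
  qed
  have ta: "\<And>i. i < k \<Longrightarrow> a (t i) \<in> carrier G" using t a by simp
  show ?thesis
  proof
    assume "\<exists>d\<in>D_set G k. ((\<lambda>i\<in>{0..<k}. inner G (t i)), id) \<otimes>\<^bsub>wreath G k\<^esub> ((\<lambda>i\<in>{0..<k}. a), p)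
              = d \<otimes>\<^bsub>wreath G k\<^esub> ((\<lambda>i\<in>{0..<k}. inner G (t i)), id)"
    then obtain b s where b: "b \<in> carrier (aut_group G)" and s: "s permutes {0..<k}"
      and eq: "((\<lambda>i\<in>{0..<k}. inner G (t i) \<otimes>\<^bsub>aut_group G\<^esub> a), p)
               = ((\<lambda>i\<in>{0..<k}. b \<otimes>\<^bsub>aut_group G\<^esub> inner G (t (s i))), s)"
      unfolding L by (auto dest!: D_elem simp: R)
    have sp: "s = p" using eq by simp
    have eqi: "inner G (t i) \<otimes>\<^bsub>aut_group G\<^esub> a = b \<otimes>\<^bsub>aut_group G\<^esub> inner G (t (p i))" if "i < k" for i
      using fun_cong[OF arg_cong[where f=fst, OF eq], of i] that sp by simp
    define ci where "ci i = t (p i) \<otimes> inv (a (t i))" for i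
    have ci: "ci i \<in> carrier G" if "i < k" for i using that t ta pk by (simp add: ci_def)
    have by_eq: "b y = ci i \<otimes> a y \<otimes> inv (ci i)" if i: "i < k" and y: "y \<in> carrier G" for i y
    proof -
      have u: "t (p i) \<in> carrier G" using t pk i by simp
      have ti: "t i \<in> carrier G" using t i by simp
      have "(inner G (t i) \<otimes>\<^bsub>aut_group G\<^esub> a) y = (b \<otimes>\<^bsub>aut_group G\<^esub> inner G (t (p i))) y"
        using eqi[OF i] by simp
      then have e: "inv (a (t i)) \<otimes> a y \<otimes> a (t i) = inv (t (p i)) \<otimes> b y \<otimes> t (p i)"
        using y ti a b u by (simp add: aut_mult)
      have "b y = t (p i) \<otimes> (inv (t (p i)) \<otimes> b y \<otimes> t (p i)) \<otimes> inv (t (p i))"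
        using u b y by (intro grp_id1) simp_all
      also have "\<dots> = t (p i) \<otimes> (inv (a (t i)) \<otimes> a y \<otimes> a (t i)) \<otimes> inv (t (p i))"
        by (simp add: e)
      also have "\<dots> = ci i \<otimes> a y \<otimes> inv (ci i)"
        unfolding ci_def using u ti a y by (simp add: m_assoc inv_mult_group)
      finally show ?thesis .
    qed
    have cc: "ci i = ci 0" if i: "i < k" for i
    proof -
      have c0: "ci 0 \<in> carrier G" using ci k by simp
      have c1: "ci i \<in> carrier G" using ci i by simp
      have "inv (ci 0) \<otimes> ci i = \<one>"
      proof (rule Z)
        show "inv (ci 0) \<otimes> ci i \<in> carrier G" using c0 c1 by simp
        show "\<forall>y\<in>carrier G. inv (ci 0) \<otimes> ci i \<otimes> y = y \<otimes> (inv (ci 0) \<otimes> ci i)"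
        proof
          fix z assume z: "z \<in> carrier G"
          obtain y where y: "y \<in> carrier G" "z = a y" using aut_bij[OF a] z
            by (metis bij_betw_imp_surj_on imageE)
          have "ci i \<otimes> z \<otimes> inv (ci i) = ci 0 \<otimes> z \<otimes> inv (ci 0)"
            using by_eq[OF i y(1)] by_eq[OF k y(1)] y by simp
          then have "inv (ci 0) \<otimes> (ci i \<otimes> z \<otimes> inv (ci i)) \<otimes> ci i = inv (ci 0) \<otimes> (ci 0 \<otimes> z \<otimes> inv (ci 0)) \<otimes> ci i"
            by simp
          then show "inv (ci 0) \<otimes> ci i \<otimes> z = z \<otimes> (inv (ci 0) \<otimes> ci i)"
            using c0 c1 z by (simp add: m_assoc)
        qed
      qed
      moreover have "ci i = ci 0 \<otimes> (inv (ci 0) \<otimes> ci i)" using c0 c1 by simp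
      ultimately show ?thesis using c0 by simp
    qed
    have "\<forall>i<k. t (p i) = ci 0 \<otimes> a (t i)"
    proof (intro allI impI)
      fix i assume i: "i < k"
      have "ci 0 \<otimes> a (t i) = t (p i) \<otimes> inv (a (t i)) \<otimes> a (t i)"
        using cc[OF i] by (simp add: ci_def)
      also have "\<dots> = t (p i)" using t pk[OF i] ta[OF i] i by (simp add: m_assoc)
      finally show "t (p i) = ci 0 \<otimes> a (t i)" by simp
    qed
    then show "\<exists>c\<in>carrier G. \<forall>i<k. t (p i) = c \<otimes> a (t i)" using ci k by blast
  next
    assume "\<exists>c\<in>carrier G. \<forall>i<k. t (p i) = c \<otimes> a (t i)"
    then obtain c where c: "c \<in> carrier G" and tc: "\<And>i. i < k \<Longrightarrow> t (p i) = c \<otimes> a (t i)" by blast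
    define b where "b = a \<otimes>\<^bsub>aut_group G\<^esub> inner G (inv c)"
    have b: "b \<in> carrier (aut_group G)" unfolding b_def using a c inner_aut by simp
    have bval: "b y = c \<otimes> a y \<otimes> inv c" if "y \<in> carrier G" for y
      unfolding b_def aut_mult using that a c by simp
    have eqi: "inner G (t i) \<otimes>\<^bsub>aut_group G\<^esub> a = b \<otimes>\<^bsub>aut_group G\<^esub> inner G (t (p i))" if i: "i < k" for i
    proof (rule aut_eqI)
      have ti: "t i \<in> carrier G" using t i by simp
      show "inner G (t i) \<otimes>\<^bsub>aut_group G\<^esub> a \<in> carrier (aut_group G)" using ti a inner_aut by simp
      show "b \<otimes>\<^bsub>aut_group G\<^esub> inner G (t (p i)) \<in> carrier (aut_group G)" using t pk[OF i] b inner_aut by simp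
      fix y assume y: "y \<in> carrier G"
      show "(inner G (t i) \<otimes>\<^bsub>aut_group G\<^esub> a) y = (b \<otimes>\<^bsub>aut_group G\<^esub> inner G (t (p i))) y"
        unfolding aut_mult using y ti a c b by (simp add: tc[OF i] bval m_assoc inv_mult_group)
    qed
    have "((\<lambda>i\<in>{0..<k}. b), p) \<in> D_set G k" using b p by (rule D_mem)
    moreover have "((\<lambda>i\<in>{0..<k}. inner G (t i)), id) \<otimes>\<^bsub>wreath G k\<^esub> ((\<lambda>i\<in>{0..<k}. a), p)
        = ((\<lambda>i\<in>{0..<k}. b), p) \<otimes>\<^bsub>wreath G k\<^esub> ((\<lambda>i\<in>{0..<k}. inner G (t i)), id)"
      unfolding L R[OF p] using eqi by (auto simp: fun_eq_iff)
    ultimately show "\<exists>d\<in>D_set G k. ((\<lambda>i\<in>{0..<k}. inner G (t i)), id) \<otimes>\<^bsub>wreath G k\<^esub> ((\<lambda>i\<in>{0..<k}. a), p)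
              = d \<otimes>\<^bsub>wreath G k\<^esub> ((\<lambda>i\<in>{0..<k}. inner G (t i)), id)" by blast
  qed
qed


lemma Q_iff:
  fixes k :: nat and t :: "nat \<Rightarrow> 'a"
  assumes k: "0 < k" and t: "\<forall>i<k. t i \<in> carrier G"
  shows "(\<forall>a\<in>carrier (aut_group G). \<forall>p. p permutes {0..<k} \<longrightarrow>
            (\<exists>c\<in>carrier G. \<forall>i<k. t (p i) = c \<otimes> a (t i)) \<longrightarrow> a = \<one>\<^bsub>aut_group G\<^esub> \<and> p = id)
    \<longleftrightarrow> inj_on t {0..<k} \<and> hol_stab G (t ` {0..<k}) = {(\<one>, \<one>\<^bsub>aut_group G\<^esub>)}"
proof
  assume Q: "\<forall>a\<in>carrier (aut_group G). \<forall>p. p permutes {0..<k} \<longrightarrow>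
            (\<exists>c\<in>carrier G. \<forall>i<k. t (p i) = c \<otimes> a (t i)) \<longrightarrow> a = \<one>\<^bsub>aut_group G\<^esub> \<and> p = id"
  have inj: "inj_on t {0..<k}"
  proof (rule inj_onI, rule ccontr)
    fix i j assume i: "i \<in> {0..<k}" and j: "j \<in> {0..<k}" and e: "t i = t j" and ne: "i \<noteq> j"
    have P: "transpose i j permutes {0..<k}" using i j by (rule permutes_swap_id)
    have "\<forall>l<k. t (transpose i j l) = \<one> \<otimes> \<one>\<^bsub>aut_group G\<^esub> (t l)"
      using e t by (auto simp: transpose_def aut_one)
    then have "transpose i j = id" using Q aut_one_closed P by blast
    then have "transpose i j i = i" by simp
    then show False using ne by simp
  qed
  define S where "S = t ` {0..<k}"
  have Sc: "S \<subseteq> carrier G" using t by (auto simp: S_def)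
  have one_in: "(\<one>, \<one>\<^bsub>aut_group G\<^esub>) \<in> hol_stab G S"
  proof -
    have "(\<lambda>s. \<one>\<^bsub>aut_group G\<^esub> (inv \<one> \<otimes> s)) ` S = S"
      using Sc by (force simp: aut_one)
    then show ?thesis unfolding hol_stab_def using aut_one_closed by simp
  qed
  have "hol_stab G S \<subseteq> {(\<one>, \<one>\<^bsub>aut_group G\<^esub>)}"
  proof
    fix h assume "h \<in> hol_stab G S"
    then obtain g a where h: "h = (g, a)" and g: "g \<in> carrier G" and a: "a \<in> carrier (aut_group G)"
      and img: "(\<lambda>s. a (inv g \<otimes> s)) ` S = S"
      unfolding hol_stab_def by blast
    define f where "f s = a (inv g \<otimes> s)" for s
    define p where "p i = (if i < k then inv_into {0..<k} t (f (t i)) else i)" for i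
    have ft: "f (t i) \<in> S" if i: "i < k" for i
    proof -
      have "t i \<in> S" unfolding S_def using i by (intro imageI) simp
      then have "f (t i) \<in> (\<lambda>s. a (inv g \<otimes> s)) ` S" unfolding f_def by (rule imageI)
      then show ?thesis using img by simp
    qed
    have tp: "\<And>i. i < k \<Longrightarrow> p i < k \<and> t (p i) = f (t i)"
    proof -
      fix i assume i: "i < k"
      have "f (t i) \<in> t ` {0..<k}" using ft[OF i] by (simp add: S_def)
      then have "inv_into {0..<k} t (f (t i)) \<in> {0..<k}" "t (inv_into {0..<k} t (f (t i))) = f (t i)"
        by (rule inv_into_into, rule f_inv_into_f)
      then show "p i < k \<and> t (p i) = f (t i)"
        using i by (simp add: p_def)
    qed
    have finj: "f u = f v \<Longrightarrow> u \<in> carrier G \<Longrightarrow> v \<in> carrier G \<Longrightarrow> u = v" for u v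
    proof -
      assume "f u = f v" "u \<in> carrier G" "v \<in> carrier G"
      then have "inv g \<otimes> u = inv g \<otimes> v"
        using aut_bij[OF a] g unfolding f_def bij_betw_def inj_on_def by simp
      then show "u = v" using g \<open>u \<in> carrier G\<close> \<open>v \<in> carrier G\<close> by simp
    qed
    have pinj: "inj_on p {0..<k}"
    proof (rule inj_onI)
      fix i j assume "i \<in> {0..<k}" "j \<in> {0..<k}" "p i = p j"
      then have "f (t i) = f (t j)" using tp by (metis atLeastLessThan_iff)
      then have "t i = t j" using finj t \<open>i \<in> {0..<k}\<close> \<open>j \<in> {0..<k}\<close> by simp
      then show "i = j" using inj \<open>i \<in> {0..<k}\<close> \<open>j \<in> {0..<k}\<close> by (simp add: inj_on_def)
    qed
    have pim: "p ` {0..<k} = {0..<k}"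
      by (rule endo_inj_surj) (use tp pinj in auto)
    have pp: "p permutes {0..<k}"
      by (rule bij_imp_permutes) (use pinj pim in \<open>auto simp: bij_betw_def p_def\<close>)
    have ig: "inv g \<in> carrier G" using g by simp
    have "\<forall>i<k. t (p i) = a (inv g) \<otimes> a (t i)"
      using tp t a ig by (simp add: f_def)
    then have "a = \<one>\<^bsub>aut_group G\<^esub> \<and> p = id" using Q a pp ig aut_closed[OF a ig] by blast
    then have a1: "a = \<one>\<^bsub>aut_group G\<^esub>" and p1: "p = id" by auto
    have t0: "t 0 \<in> carrier G" using t k by simp
    have "t 0 = inv g \<otimes> t 0" using tp[OF k] p1 t0 ig a1 by (simp add: f_def aut_one)
    then have "inv g = \<one>" using ig t0 by (metis l_one r_cancel one_closed)
    then have "g = \<one>" using g by (metis inv_inv inv_one)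
    then show "h \<in> {(\<one>, \<one>\<^bsub>aut_group G\<^esub>)}" using h a1 by simp
  qed
  then show "inj_on t {0..<k} \<and> hol_stab G (t ` {0..<k}) = {(\<one>, \<one>\<^bsub>aut_group G\<^esub>)}"
    using inj one_in by (auto simp: S_def)
next
  assume H: "inj_on t {0..<k} \<and> hol_stab G (t ` {0..<k}) = {(\<one>, \<one>\<^bsub>aut_group G\<^esub>)}"
  show "\<forall>a\<in>carrier (aut_group G). \<forall>p. p permutes {0..<k} \<longrightarrow>
            (\<exists>c\<in>carrier G. \<forall>i<k. t (p i) = c \<otimes> a (t i)) \<longrightarrow> a = \<one>\<^bsub>aut_group G\<^esub> \<and> p = id"
  proof (intro ballI allI impI)
    fix a p assume a: "a \<in> carrier (aut_group G)" and p: "p permutes {0..<k}"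
      and "\<exists>c\<in>carrier G. \<forall>i<k. t (p i) = c \<otimes> a (t i)"
    then obtain c where c: "c \<in> carrier G" and tc: "\<And>i. i < k \<Longrightarrow> t (p i) = c \<otimes> a (t i)" by blast
    obtain h where h: "h \<in> carrier G" "a h = c" using aut_bij[OF a] c
      by (metis bij_betw_imp_surj_on imageE)
    have "(\<lambda>s. a (inv (inv h) \<otimes> s)) ` (t ` {0..<k}) = (\<lambda>i. a (inv (inv h) \<otimes> t i)) ` {0..<k}"
      by (simp add: image_image)
    also have "\<dots> = (\<lambda>i. t (p i)) ` {0..<k}"
      by (rule image_cong) (use h t a tc in auto)
    also have "\<dots> = t ` {0..<k}" using permutes_image[OF p] by (metis image_image)
    finally have "(inv h, a) \<in> hol_stab G (t ` {0..<k})"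
      unfolding hol_stab_def using h a by simp
    then have ha: "inv h = \<one>" "a = \<one>\<^bsub>aut_group G\<^esub>" using H by auto
    have "h = \<one>" using ha(1) h by (metis inv_inv inv_one)
    then have c1: "c = \<one>" using h a by simp
    have pi: "p i = i" for i
    proof (cases "i < k")
      case True
      then have "t (p i) = t i" using tc[OF True] c1 ha(2) t by (simp add: aut_one)
      moreover have "p i < k" using permutes_in_image[OF p] True by simp
      ultimately show ?thesis using H True by (simp add: inj_on_def)
    next
      case False
      then show ?thesis using permutes_not_in[OF p] by simp
    qed
    show "a = \<one>\<^bsub>aut_group G\<^esub> \<and> p = id" using ha pi by auto
  qed
qed

end

lemma (in simple_group) center_trivial:
  assumes nc: "\<not> comm_group G" and z: "z \<in> carrier G" and zc: "\<forall>y\<in>carrier G. z \<otimes> y = y \<otimes> z"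
  shows "z = \<one>"
proof -
  define Zc where "Zc = {z \<in> carrier G. \<forall>y\<in>carrier G. z \<otimes> y = y \<otimes> z}"
  have sg: "subgroup Zc G"
  proof (rule subgroupI)
    show "Zc \<subseteq> carrier G" "Zc \<noteq> {}" by (auto simp: Zc_def)
  next
    fix u assume u: "u \<in> Zc"
    show "inv u \<in> Zc" unfolding Zc_def
    proof (intro CollectI conjI ballI)
      show "inv u \<in> carrier G" using u by (simp add: Zc_def)
      fix y assume y: "y \<in> carrier G"
      have uc: "u \<in> carrier G" and comm: "u \<otimes> y = y \<otimes> u"
        using u y by (auto simp: Zc_def)
      have "inv u \<otimes> y = inv u \<otimes> (y \<otimes> u) \<otimes> inv u" using uc y by (simp add: m_assoc)
      also have "\<dots> = inv u \<otimes> (u \<otimes> y) \<otimes> inv u" using comm by simp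
      also have "\<dots> = y \<otimes> inv u" using uc y by (simp add: m_assoc)
      finally show "inv u \<otimes> y = y \<otimes> inv u" .
    qed
  next
    fix u v assume "u \<in> Zc" "v \<in> Zc"
    then have uc: "u \<in> carrier G" "\<And>y. y \<in> carrier G \<Longrightarrow> u \<otimes> y = y \<otimes> u"
      and vc: "v \<in> carrier G" "\<And>y. y \<in> carrier G \<Longrightarrow> v \<otimes> y = y \<otimes> v" by (auto simp: Zc_def)
    have "u \<otimes> v \<otimes> y = y \<otimes> (u \<otimes> v)" if y: "y \<in> carrier G" for y
    proof -
      have "u \<otimes> v \<otimes> y = u \<otimes> (v \<otimes> y)" using uc(1) vc(1) y by (simp add: m_assoc)
      also have "\<dots> = u \<otimes> (y \<otimes> v)" by (simp only: vc(2)[OF y])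
      also have "\<dots> = (u \<otimes> y) \<otimes> v" using uc(1) vc(1) y by (simp add: m_assoc)
      also have "\<dots> = (y \<otimes> u) \<otimes> v" by (simp only: uc(2)[OF y])
      also have "\<dots> = y \<otimes> (u \<otimes> v)" using uc(1) vc(1) y by (simp add: m_assoc)
      finally show ?thesis .
    qed
    then show "u \<otimes> v \<in> Zc" using uc(1) vc(1) unfolding Zc_def by simp
  qed
  have "Zc \<lhd> G"
    unfolding normal_inv_iff
  proof (intro conjI ballI sg)
    fix x h assume x: "x \<in> carrier G" and h: "h \<in> Zc"
    then have "x \<otimes> h \<otimes> inv x = h" by (simp add: Zc_def m_assoc)
    then show "x \<otimes> h \<otimes> inv x \<in> Zc" using h by simp
  qed
  then have "Zc = carrier G \<or> Zc = {\<one>}" by (rule no_real_normal_subgroup)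
  moreover have "Zc \<noteq> carrier G"
  proof
    assume "Zc = carrier G"
    then have "comm_group G" by (intro group_comm_groupI) (auto simp: Zc_def)
    then show False using nc by simp
  qed
  ultimately show ?thesis using z zc by (auto simp: Zc_def)
qed


theorem lemma2p13:
  fixes T :: "('a, 'b) monoid_scheme" and k :: nat and t :: "nat \<Rightarrow> 'a"
  assumes "simple_group T" and "finite (carrier T)" and "\<not> comm_group T"
    and "k \<ge> 2"
    and "\<forall>i\<in>{0..<k}. t i \<in> carrier T"
  shows "is_base T k {D_set T k,
           D_set T k #>\<^bsub>W_group T k\<^esub> ((\<lambda>i\<in>{0..<k}. inner T (t i)), id)}
         \<longleftrightarrow> inj_on t {0..<k} \<and>
             hol_stab T (t ` {0..<k}) = {(\<one>\<^bsub>T\<^esub>, \<one>\<^bsub>aut_group T\<^esub>)}"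
proof -
  have grp: "group T" using assms(1) by (simp add: simple_group_def)
  have Z: "\<And>z. z \<in> carrier T \<Longrightarrow> \<forall>y\<in>carrier T. z \<otimes>\<^bsub>T\<^esub> y = y \<otimes>\<^bsub>T\<^esub> z \<Longrightarrow> z = \<one>\<^bsub>T\<^esub>"
    using simple_group.center_trivial[OF assms(1) assms(3)] by blast
  interpret W: group "wreath T k" by (rule group.group_wreath[OF grp])
  define D where "D = D_set T k"
  define x where "x = ((\<lambda>i\<in>{0..<k}. inner T (t i)), (id :: nat \<Rightarrow> nat))"
  have k0: "0 < k" using assms(4) by simp
  have tc: "\<forall>i<k. t i \<in> carrier T" using assms(5) by simp
  have Dsub: "subgroup D (wreath T k)" unfolding D_def by (rule group.D_subgroup[OF grp])
  have Dc: "D \<subseteq> carrier (wreath T k)" using Dsub by (rule subgroup.subset)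
  have DW: "D \<subseteq> W_set T k" unfolding D_def by (rule group.D_W[OF grp])
  have xW: "x \<in> W_set T k" unfolding x_def using tc by (rule group.x_W[OF grp])
  have Wc: "W_set T k \<subseteq> carrier (wreath T k)" by (auto simp: W_set_def)
  have xc: "x \<in> carrier (wreath T k)" using xW Wc by blast
  have oD: "\<one>\<^bsub>wreath T k\<^esub> \<in> D" using Dsub by (rule subgroup.one_closed)
  have rc: "\<And>H a. H #>\<^bsub>W_group T k\<^esub> a = H #>\<^bsub>wreath T k\<^esub> a"
    unfolding r_coset_def W_group_def by simp
  have cW: "carrier (W_group T k) = W_set T k" by (simp add: W_group_def)
  have oW: "\<one>\<^bsub>W_group T k\<^esub> = \<one>\<^bsub>wreath T k\<^esub>" by (simp add: W_group_def)
  have B: "{D, D #>\<^bsub>W_group T k\<^esub> x} \<subseteq> rcosets\<^bsub>W_group T k\<^esub> D"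
  proof -
    have "D = D #>\<^bsub>wreath T k\<^esub> \<one>\<^bsub>wreath T k\<^esub>" using Dc by simp
    moreover have "\<one>\<^bsub>wreath T k\<^esub> \<in> W_set T k" using oD DW by blast
    ultimately show ?thesis using xW unfolding RCOSETS_def rc cW by blast
  qed
  have stab: "(D #>\<^bsub>W_group T k\<^esub> w = D \<and> (D #>\<^bsub>W_group T k\<^esub> x) #>\<^bsub>W_group T k\<^esub> w = D #>\<^bsub>W_group T k\<^esub> x)
      \<longleftrightarrow> (w \<in> D \<and> (\<exists>d\<in>D. x \<otimes>\<^bsub>wreath T k\<^esub> w = d \<otimes>\<^bsub>wreath T k\<^esub> x))"
    if w: "w \<in> W_set T k" for w
  proof -
    have wc: "w \<in> carrier (wreath T k)" using w Wc by blast
    have a: "(D #>\<^bsub>wreath T k\<^esub> x) #>\<^bsub>wreath T k\<^esub> w = D #>\<^bsub>wreath T k\<^esub> (x \<otimes>\<^bsub>wreath T k\<^esub> w)"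
      using Dc xc wc by (rule W.coset_mult_assoc)
    show ?thesis unfolding rc a
    proof
      assume h: "D #>\<^bsub>wreath T k\<^esub> w = D \<and> D #>\<^bsub>wreath T k\<^esub> (x \<otimes>\<^bsub>wreath T k\<^esub> w) = D #>\<^bsub>wreath T k\<^esub> x"
      have "w \<in> D" using W.rcos_self[OF wc Dsub] h by simp
      moreover have "x \<otimes>\<^bsub>wreath T k\<^esub> w \<in> D #>\<^bsub>wreath T k\<^esub> x"
        using W.rcos_self[OF W.m_closed[OF xc wc] Dsub] h by simp
      then have "\<exists>d\<in>D. x \<otimes>\<^bsub>wreath T k\<^esub> w = d \<otimes>\<^bsub>wreath T k\<^esub> x"
        unfolding r_coset_def by blast
      ultimately show "w \<in> D \<and> (\<exists>d\<in>D. x \<otimes>\<^bsub>wreath T k\<^esub> w = d \<otimes>\<^bsub>wreath T k\<^esub> x)" by blast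
    next
      assume h: "w \<in> D \<and> (\<exists>d\<in>D. x \<otimes>\<^bsub>wreath T k\<^esub> w = d \<otimes>\<^bsub>wreath T k\<^esub> x)"
      then obtain d where d: "d \<in> D" and e: "x \<otimes>\<^bsub>wreath T k\<^esub> w = d \<otimes>\<^bsub>wreath T k\<^esub> x" by blast
      have dc: "d \<in> carrier (wreath T k)" using d Dc by blast
      have "D #>\<^bsub>wreath T k\<^esub> w = D" using wc Dsub h by (intro W.coset_join2) auto
      moreover have "D #>\<^bsub>wreath T k\<^esub> (d \<otimes>\<^bsub>wreath T k\<^esub> x) = D #>\<^bsub>wreath T k\<^esub> x"
        using W.coset_mult_assoc[OF Dc dc xc, symmetric] W.coset_join2[OF dc Dsub d] by simp
      ultimately show "D #>\<^bsub>wreath T k\<^esub> w = D \<and> D #>\<^bsub>wreath T k\<^esub> (x \<otimes>\<^bsub>wreath T k\<^esub> w) = D #>\<^bsub>wreath T k\<^esub> x"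
        using e by simp
    qed
  qed
  have base: "is_base T k {D, D #>\<^bsub>W_group T k\<^esub> x}
      \<longleftrightarrow> (\<forall>w\<in>D. (\<exists>d\<in>D. x \<otimes>\<^bsub>wreath T k\<^esub> w = d \<otimes>\<^bsub>wreath T k\<^esub> x) \<longrightarrow> w = \<one>\<^bsub>wreath T k\<^esub>)"
  proof -
    have S: "{w \<in> carrier (W_group T k). \<forall>\<omega>\<in>{D, D #>\<^bsub>W_group T k\<^esub> x}. \<omega> #>\<^bsub>W_group T k\<^esub> w = \<omega>}
       = {w \<in> W_set T k. w \<in> D \<and> (\<exists>d\<in>D. x \<otimes>\<^bsub>wreath T k\<^esub> w = d \<otimes>\<^bsub>wreath T k\<^esub> x)}"
      using stab unfolding cW by auto
    have one: "\<one>\<^bsub>wreath T k\<^esub> \<in> {w \<in> W_set T k. w \<in> D \<and> (\<exists>d\<in>D. x \<otimes>\<^bsub>wreath T k\<^esub> w = d \<otimes>\<^bsub>wreath T k\<^esub> x)}"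
    proof -
      have "x \<otimes>\<^bsub>wreath T k\<^esub> \<one>\<^bsub>wreath T k\<^esub> = \<one>\<^bsub>wreath T k\<^esub> \<otimes>\<^bsub>wreath T k\<^esub> x"
        using xc by simp
      then show ?thesis using oD DW by blast
    qed
    have E: "{w \<in> W_set T k. w \<in> D \<and> (\<exists>d\<in>D. x \<otimes>\<^bsub>wreath T k\<^esub> w = d \<otimes>\<^bsub>wreath T k\<^esub> x)} = {\<one>\<^bsub>wreath T k\<^esub>}
        \<longleftrightarrow> (\<forall>w\<in>D. (\<exists>d\<in>D. x \<otimes>\<^bsub>wreath T k\<^esub> w = d \<otimes>\<^bsub>wreath T k\<^esub> x) \<longrightarrow> w = \<one>\<^bsub>wreath T k\<^esub>)"
    proof
      assume h: "{w \<in> W_set T k. w \<in> D \<and> (\<exists>d\<in>D. x \<otimes>\<^bsub>wreath T k\<^esub> w = d \<otimes>\<^bsub>wreath T k\<^esub> x)} = {\<one>\<^bsub>wreath T k\<^esub>}"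
      show "\<forall>w\<in>D. (\<exists>d\<in>D. x \<otimes>\<^bsub>wreath T k\<^esub> w = d \<otimes>\<^bsub>wreath T k\<^esub> x) \<longrightarrow> w = \<one>\<^bsub>wreath T k\<^esub>"
      proof (intro ballI impI)
        fix w assume "w \<in> D" "\<exists>d\<in>D. x \<otimes>\<^bsub>wreath T k\<^esub> w = d \<otimes>\<^bsub>wreath T k\<^esub> x"
        then have "w \<in> {w \<in> W_set T k. w \<in> D \<and> (\<exists>d\<in>D. x \<otimes>\<^bsub>wreath T k\<^esub> w = d \<otimes>\<^bsub>wreath T k\<^esub> x)}"
          using DW by blast
        then show "w = \<one>\<^bsub>wreath T k\<^esub>" unfolding h by simp
      qed
    next
      assume h: "\<forall>w\<in>D. (\<exists>d\<in>D. x \<otimes>\<^bsub>wreath T k\<^esub> w = d \<otimes>\<^bsub>wreath T k\<^esub> x) \<longrightarrow> w = \<one>\<^bsub>wreath T k\<^esub>"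
      show "{w \<in> W_set T k. w \<in> D \<and> (\<exists>d\<in>D. x \<otimes>\<^bsub>wreath T k\<^esub> w = d \<otimes>\<^bsub>wreath T k\<^esub> x)} = {\<one>\<^bsub>wreath T k\<^esub>}"
        using h one by blast
    qed
    show ?thesis unfolding is_base_def D_def[symmetric] S oW using B E by (simp only: simp_thms)
  qed
  define Q where "Q = (\<forall>a\<in>carrier (aut_group T). \<forall>p. p permutes {0..<k} \<longrightarrow>
            (\<exists>c\<in>carrier T. \<forall>i<k. t (p i) = c \<otimes>\<^bsub>T\<^esub> a (t i)) \<longrightarrow> a = \<one>\<^bsub>aut_group T\<^esub> \<and> p = id)"
  have Dchar: "(\<forall>w\<in>D. (\<exists>d\<in>D. x \<otimes>\<^bsub>wreath T k\<^esub> w = d \<otimes>\<^bsub>wreath T k\<^esub> x) \<longrightarrow> w = \<one>\<^bsub>wreath T k\<^esub>) \<longleftrightarrow> Q"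
  proof -
    have one_iff: "((\<lambda>i\<in>{0..<k}. a), p) = \<one>\<^bsub>wreath T k\<^esub> \<longleftrightarrow> a = \<one>\<^bsub>aut_group T\<^esub> \<and> p = id" for a and p :: "nat \<Rightarrow> nat"
    proof -
      have "(\<lambda>i\<in>{0..<k}. a) = (\<lambda>i\<in>{0..<k}. \<one>\<^bsub>aut_group T\<^esub>) \<longleftrightarrow> a = \<one>\<^bsub>aut_group T\<^esub>"
        using k0 by (metis atLeastLessThan_iff le0 restrict_apply')
      then show ?thesis by (simp add: wreath_def)
    qed
    have ci: "(\<exists>d\<in>D. x \<otimes>\<^bsub>wreath T k\<^esub> ((\<lambda>i\<in>{0..<k}. a), p) = d \<otimes>\<^bsub>wreath T k\<^esub> x)
       \<longleftrightarrow> (\<exists>c\<in>carrier T. \<forall>i<k. t (p i) = c \<otimes>\<^bsub>T\<^esub> a (t i))"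
      if "a \<in> carrier (aut_group T)" "p permutes {0..<k}" for a p
      unfolding D_def x_def using group.conj_iff[OF grp Z k0 tc that] by simp
    show ?thesis
    proof
      assume H: "\<forall>w\<in>D. (\<exists>d\<in>D. x \<otimes>\<^bsub>wreath T k\<^esub> w = d \<otimes>\<^bsub>wreath T k\<^esub> x) \<longrightarrow> w = \<one>\<^bsub>wreath T k\<^esub>"
      show Q unfolding Q_def
      proof (intro ballI allI impI)
        fix a p assume a: "a \<in> carrier (aut_group T)" and p: "p permutes {0..<k}"
          and c: "\<exists>c\<in>carrier T. \<forall>i<k. t (p i) = c \<otimes>\<^bsub>T\<^esub> a (t i)"
        have "((\<lambda>i\<in>{0..<k}. a), p) \<in> D" unfolding D_def using a p by (rule group.D_mem[OF grp])
        then show "a = \<one>\<^bsub>aut_group T\<^esub> \<and> p = id" using H ci[OF a p] c one_iff by blast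
      qed
    next
      assume Q
      show "\<forall>w\<in>D. (\<exists>d\<in>D. x \<otimes>\<^bsub>wreath T k\<^esub> w = d \<otimes>\<^bsub>wreath T k\<^esub> x) \<longrightarrow> w = \<one>\<^bsub>wreath T k\<^esub>"
      proof (intro ballI impI)
        fix w assume w: "w \<in> D" and e: "\<exists>d\<in>D. x \<otimes>\<^bsub>wreath T k\<^esub> w = d \<otimes>\<^bsub>wreath T k\<^esub> x"
        obtain a p where wap: "w = ((\<lambda>i\<in>{0..<k}. a), p)" and a: "a \<in> carrier (aut_group T)" and p: "p permutes {0..<k}"
          using group.D_elem[OF grp] w unfolding D_def by blast
        have "\<exists>c\<in>carrier T. \<forall>i<k. t (p i) = c \<otimes>\<^bsub>T\<^esub> a (t i)" using ci[OF a p] e wap by simp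
        then have "a = \<one>\<^bsub>aut_group T\<^esub> \<and> p = id" using \<open>Q\<close> a p unfolding Q_def by blast
        then show "w = \<one>\<^bsub>wreath T k\<^esub>" using wap one_iff by simp
      qed
    qed
  qed
  have Qiff: "Q \<longleftrightarrow> inj_on t {0..<k} \<and> hol_stab T (t ` {0..<k}) = {(\<one>\<^bsub>T\<^esub>, \<one>\<^bsub>aut_group T\<^esub>)}"
    unfolding Q_def by (rule group.Q_iff[OF grp k0 tc])
  show ?thesis using base Dchar Qiff unfolding D_def x_def by simp
qed

end
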